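(* Let $D:\mathbb R^2\setminus\{0\}\to\mathbb R$ be nonnegative, bounded and continuously differentiable, and let $x:[a,b]\to\mathbb R^2\setminus\{0\}$ be a nonrectilinear solution of $\ddot x+D(x)\dot x=-x/|x|^3$. Set $r=|x|$, $c=\det(x,\dot x)$ and $v=-\frac1r+\frac{c^2}{2r^2}$. If $\dot r(t)\ge0$ for all $t\in[a,b]$ and $v(b)\ge0$, then $\dot v\le0$ on $[a,b]$.
   Context: A solution is nonrectilinear if $\det(x,\dot x)$ is not identically zero. *)

theory Defs
  imports "HOL-Analysis.Analysis"
begin

definition det2 :: "real \<times> real \<Rightarrow> real \<times> real \<Rightarrow> real" where
  "det2 p q = fst p * snd q - snd p * fst q"

end

theory Submission
  imports Defs
begin

lemma fstd: assumes "(x has_vector_derivative x') (at t within S)"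
  shows "((\<lambda>s. fst (x s)) has_real_derivative fst x') (at t within S)"
    "((\<lambda>s. snd (x s)) has_real_derivative snd (x'::real\<times>real)) (at t within S)"
  using assms unfolding has_real_derivative_iff_has_vector_derivative has_vector_derivative_def
  by (auto intro!: derivative_eq_intros)

lemma uniq_deriv:
  fixes f :: "real \<Rightarrow> real"
  assumes "a < b" "t \<in> {a..b}" "(f has_real_derivative d1) (at t within {a..b})"
    "(f has_real_derivative d2) (at t within {a..b})"
  shows "d1 = d2"
  using vector_derivative_unique_within_closed_interval[of a b t f d1 d2] assms
  by (simp add: has_real_derivative_iff_has_vector_derivative)

lemma mono_deriv:
  fixes f :: "real \<Rightarrow> real"
  assumes "a \<le> t" "t \<le> b"
    "\<And>s. s \<in> {a..b} \<Longrightarrow> (f has_real_derivative f' s) (at s within {a..b})"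
    "\<And>s. s \<in> {a..b} \<Longrightarrow> f' s \<ge> 0"
  shows "f t \<le> f b"
proof -
  have "\<And>s. t \<le> s \<Longrightarrow> s \<le> b \<Longrightarrow> (f has_derivative (\<lambda>h. h * f' s)) (at s within {t..b})"
  proof -
    fix s assume "t \<le> s" "s \<le> b"
    then have "(f has_real_derivative f' s) (at s within {a..b})" using assms by auto
    then have "(f has_real_derivative f' s) (at s within {t..b})"
      by (rule DERIV_subset) (use assms in auto)
    moreover have e: "(\<lambda>h. h * f' s) = (*) (f' s)" by (auto simp: fun_eq_iff)
    ultimately show "(f has_derivative (\<lambda>h. h * f' s)) (at s within {t..b})"
      unfolding has_field_derivative_def by simp
  qed
  from mvt_very_simple[OF assms(2) this] obtain s where "s \<in> {t..b}" "f b - f t = (b - t) * f' s"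
    by auto
  moreover have "f' s \<ge> 0" using assms \<open>s \<in> {t..b}\<close> by auto
  moreover have "b - t \<ge> 0" using assms by simp
  ultimately have "(b - t) * f' s \<ge> 0" "f b - f t = (b - t) * f' s" by simp_all
  then show ?thesis by linarith
qed

theorem lemma7p3:
  fixes D :: "real \<times> real \<Rightarrow> real"
    and D' :: "real \<times> real \<Rightarrow> (real \<times> real) \<Rightarrow>\<^sub>L real"
    and x x' x'' :: "real \<Rightarrow> real \<times> real"
    and a b :: real
  assumes D_nonneg: "\<forall>p. p \<noteq> 0 \<longrightarrow> D p \<ge> 0"
    and D_bounded: "bounded (D ` (UNIV - {0}))"
    and D_deriv: "\<forall>p. p \<noteq> 0 \<longrightarrow> (D has_derivative blinfun_apply (D' p)) (at p)"
    and D'_cont: "continuous_on (UNIV - {0}) D'"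
    and ab: "a < b"
    and x_nz: "\<forall>t\<in>{a..b}. x t \<noteq> 0"
    and x_deriv: "\<forall>t\<in>{a..b}. (x has_vector_derivative x' t) (at t within {a..b})"
    and x'_deriv: "\<forall>t\<in>{a..b}. (x' has_vector_derivative x'' t) (at t within {a..b})"
    and ode: "\<forall>t\<in>{a..b}. x'' t + D (x t) *\<^sub>R x' t = - ((1 / norm (x t) ^ 3) *\<^sub>R x t)"
    and nonrect: "\<exists>t\<in>{a..b}. det2 (x t) (x' t) \<noteq> 0"
    and r_incr: "\<forall>t\<in>{a..b}. \<forall>d. ((\<lambda>s. norm (x s)) has_real_derivative d) (at t within {a..b}) \<longrightarrow> d \<ge> 0"
    and vb: "- 1 / norm (x b) + (det2 (x b) (x' b))\<^sup>2 / (2 * (norm (x b))\<^sup>2) \<ge> 0"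
  shows "\<forall>t\<in>{a..b}. \<forall>d. ((\<lambda>s. - 1 / norm (x s) + (det2 (x s) (x' s))\<^sup>2 / (2 * (norm (x s))\<^sup>2))
            has_real_derivative d) (at t within {a..b}) \<longrightarrow> d \<le> 0"
proof -
  define p where "p s = fst (x s)" for s
  define q where "q s = snd (x s)" for s
  define u where "u s = fst (x' s)" for s
  define w where "w s = snd (x' s)" for s
  define r where "r s = norm (x s)" for s
  define c where "c s = det2 (x s) (x' s)" for s
  define r' where "r' s = (p s * u s + q s * w s) / r s" for s
  have r_eq: "r s = sqrt (p s ^ 2 + q s ^ 2)" for s
    unfolding r_def p_def q_def norm_prod_def by simp
  have c_eq: "c s = p s * w s - q s * u s" for s
    unfolding c_def det2_def p_def q_def u_def w_def by simp
  have rpos: "r t > 0" if "t \<in> {a..b}" for t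
    using x_nz that unfolding r_def by auto
  have dp: "(p has_real_derivative u t) (at t within {a..b})"
   and dq: "(q has_real_derivative w t) (at t within {a..b})"
   and du: "(u has_real_derivative fst (x'' t)) (at t within {a..b})"
   and dw: "(w has_real_derivative snd (x'' t)) (at t within {a..b})"
    if "t \<in> {a..b}" for t
    using fstd[OF x_deriv[rule_format, OF that]] fstd[OF x'_deriv[rule_format, OF that]]
    unfolding p_def q_def u_def w_def by (auto simp: fun_eq_iff)
  have ode1: "fst (x'' t) = - D (x t) * u t - p t / r t ^ 3"
   and ode2: "snd (x'' t) = - D (x t) * w t - q t / r t ^ 3" if "t \<in> {a..b}" for t
  proof -
    have "x'' t = - D (x t) *\<^sub>R x' t - ((1 / r t ^ 3) *\<^sub>R x t)"
      using ode[rule_format, OF that] unfolding r_def by (simp add: algebra_simps eq_neg_iff_add_eq_0)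
    then show "fst (x'' t) = - D (x t) * u t - p t / r t ^ 3"
      "snd (x'' t) = - D (x t) * w t - q t / r t ^ 3"
      unfolding u_def w_def p_def q_def by simp_all
  qed
  have dr: "(r has_real_derivative r' t) (at t within {a..b})" if "t \<in> {a..b}" for t
  proof -
    have pos: "p t ^ 2 + q t ^ 2 > 0" using rpos[OF that] r_eq[of t] by auto
    have "((\<lambda>s. sqrt (p s ^ 2 + q s ^ 2)) has_real_derivative
       (p t * u t + q t * w t) / sqrt (p t ^ 2 + q t ^ 2)) (at t within {a..b})"
    proof -
      have sp: "sqrt (p t * p t + q t * q t) > 0" using pos by (simp add: power2_eq_square)
      have eqq: "(p t * (u t * 2) + q t * (w t * 2)) / (2 * sqrt (p t * p t + q t * q t)) = (p t * u t + q t * w t) / sqrt (p t * p t + q t * q t)"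
      proof -
        have h2: "p t * (u t * 2) + q t * (w t * 2) = 2 * (p t * u t + q t * w t)" by (simp add: algebra_simps)
        show ?thesis by (simp only: h2 mult_divide_mult_cancel_left_if) simp
      qed
      show ?thesis using pos dp[OF that] dq[OF that]
        by (auto intro!: derivative_eq_intros simp: power2_eq_square) (simp add: divide_inverse algebra_simps)
    qed
    moreover have "(p t * u t + q t * w t) / sqrt (p t ^ 2 + q t ^ 2) = r' t"
      unfolding r'_def r_eq by simp
    ultimately show ?thesis using r_eq by (simp add: fun_eq_iff[symmetric] r_eq[abs_def])
  qed
  have dc: "(c has_real_derivative - D (x t) * c t) (at t within {a..b})" if "t \<in> {a..b}" for t
  proof -
    have "((\<lambda>s. p s * w s - q s * u s) has_real_derivative
       u t * w t + p t * snd (x'' t) - (w t * u t + q t * fst (x'' t))) (at t within {a..b})"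
      using dp[OF that] dq[OF that] du[OF that] dw[OF that]
      by (auto intro!: derivative_eq_intros)
    moreover have "u t * w t + p t * snd (x'' t) - (w t * u t + q t * fst (x'' t)) = - D (x t) * c t"
      unfolding ode1[OF that] ode2[OF that] c_eq by (simp add: algebra_simps)
    ultimately show ?thesis by (simp add: c_eq[abs_def])
  qed
  have r'nn: "r' t \<ge> 0" if "t \<in> {a..b}" for t
    using r_incr[rule_format, OF that, of "r' t"] dr[OF that] unfolding r_def[abs_def] by simp
  have rmono: "r t \<le> r b" if "t \<in> {a..b}" for t
    using mono_deriv[of a t b r r'] that dr r'nn by auto
  have cmono: "c b ^ 2 \<le> c t ^ 2" if "t \<in> {a..b}" for t
  proof -
    have "(\<lambda>s. - (c s ^ 2)) t \<le> (\<lambda>s. - (c s ^ 2)) b"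
    proof (rule mono_deriv[of a t b _ "\<lambda>s. 2 * D (x s) * c s ^ 2"])
      fix s assume s: "s \<in> {a..b}"
      show "((\<lambda>s. - (c s ^ 2)) has_real_derivative 2 * D (x s) * (c s)\<^sup>2) (at s within {a..b})"
        using dc[OF s] by (auto intro!: derivative_eq_intros simp: power2_eq_square)
      have "D (x s) \<ge> 0" using D_nonneg x_nz s by blast
      then show "0 \<le> 2 * D (x s) * (c s)\<^sup>2" by simp
    qed (use that in auto)
    then show ?thesis by simp
  qed
  have cb: "c b ^ 2 \<ge> 2 * r b"
  proof -
    have rb: "r b > 0" using rpos ab by auto
    have "0 \<le> - 1 / r b + c b ^ 2 / (2 * r b ^ 2)" using vb unfolding r_def c_def by simp
    then have "0 \<le> (- 2 * r b + c b ^ 2) / (2 * r b ^ 2)" using rb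
      by (simp add: field_simps power2_eq_square)
    then show ?thesis using rb by (simp add: zero_le_divide_iff)
  qed
  show ?thesis
  proof (intro ballI allI impI)
    fix t d assume t: "t \<in> {a..b}"
    assume hd: "((\<lambda>s. - 1 / norm (x s) + (det2 (x s) (x' s))\<^sup>2 / (2 * (norm (x s))\<^sup>2))
            has_real_derivative d) (at t within {a..b})"
    have rt: "r t > 0" using rpos[OF t] .
    have "((\<lambda>s. - 1 / r s + (c s)\<^sup>2 / (2 * (r s)\<^sup>2)) has_real_derivative
        r' t / r t ^ 2 + (2 * c t * (- D (x t) * c t) * (2 * r t ^ 2) - c t ^ 2 * (2 * (2 * r t * r' t)))
           / (2 * r t ^ 2) ^ 2) (at t within {a..b})"
      using dr[OF t] dc[OF t] rt
      by (auto intro!: derivative_eq_intros simp: power2_eq_square field_simps)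
    then have deq: "d = r' t / r t ^ 2 + (2 * c t * (- D (x t) * c t) * (2 * r t ^ 2) - c t ^ 2 * (2 * (2 * r t * r' t)))
           / (2 * r t ^ 2) ^ 2"
      using uniq_deriv[OF ab t hd] unfolding r_def[abs_def] c_def[abs_def] by simp
    have "d = r' t * (r t - c t ^ 2) / r t ^ 3 - D (x t) * c t ^ 2 / r t ^ 2"
      unfolding deq using rt by (simp add: field_simps power2_eq_square power3_eq_cube)
    moreover have "r' t * (r t - c t ^ 2) / r t ^ 3 \<le> 0"
    proof -
      have "r t - c t ^ 2 \<le> 0" using cmono[OF t] cb rmono[OF t] rt by linarith
      then show ?thesis using r'nn[OF t] rt by (simp add: divide_nonpos_pos mult_nonneg_nonpos)
    qed
    moreover have "D (x t) * c t ^ 2 / r t ^ 2 \<ge> 0"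
    proof -
      have "D (x t) \<ge> 0" using D_nonneg x_nz t by blast
      then show ?thesis by simp
    qed
    ultimately show "d \<le> 0" by linarith
  qed
qed

end
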